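(* Consider an instance of General MinMD$+$OCTC$_{line}$ in which all base stations satisfy $y(b_k)\ge 0$. There exists an optimal solution with the following property: for every opened base station $b_k$, if $[x(t_i),x(t_j)]$ is the leftmost target interval covered by a sensor $s_u$ emitted by $b_k$ and $[x(t_{i'}),x(t_{j'})]$ is the rightmost target interval covered by a sensor $s_v$ emitted by $b_k$, then every target $t$ with $x(t)\in[x(t_i),x(t_{j'})]$ is covered by a sensor emitted by $b_k$.
   Context: General MinMD$+$OCTC$_{line}$: targets $\mathcal{T}=\{t_1,\dots,t_n\}$ lie on a line $L$, taken as the $x$-axis, so $t_i=(x(t_i),0)$, sorted left to right. Base stations $\mathcal{B}=\{b_1,\dots,b_m\}$ are points of the plane with opening costs $c_k\ge 0$. A fixed radius $r\ge 0$ is given. A solution consists of a set of opened base stations and a finite multiset of mobile sensors; each sensor $s$ is emitted by some opened base station $b_k$ and placed at an arbitrary destination point in the plane (not necessarily on $L$); its moving distance is the Euclidean distance from $b_k$ to its destination. A sensor covers a target if the target is at Euclidean distance at most $r$ from the sensor's destination. An opened base station may emit arbitrarily many sensors. A solution is feasible if every target is covered; its cost is the sum of opening costs of opened base stations plus the total moving distance; the goal is to minimize cost. The target interval covered by a sensor $s$ is $[x(t_i),x(t_j)]$ where $t_i$ and $t_j$ are the leftmost and rightmost targets covered by $s$. *)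

theory Defs
  imports "HOL-Analysis.Analysis" "HOL-Library.Multiset"
begin

(* Targets are given by their x-coordinates T :: real set; target t is the point (t,0).
   Base stations are indices 'b in a finite set B, with position pos k :: real \<times> real
   (the product metric on real \<times> real is the Euclidean metric) and opening cost c k.
   A sensor is a pair (k, p): emitted by base station k, placed at destination p.
   A solution is a set Op of opened base stations and a finite multiset S of sensors. *)

definition covers :: "real \<Rightarrow> real \<times> real \<Rightarrow> real \<Rightarrow> bool" where
  "covers r p t \<longleftrightarrow> dist p (t, 0) \<le> r"

definition feasible ::
  "real set \<Rightarrow> 'b set \<Rightarrow> real \<Rightarrow> 'b set \<Rightarrow> ('b \<times> (real \<times> real)) multiset \<Rightarrow> bool" where
  "feasible T B r Op S \<longleftrightarrow>
     Op \<subseteq> B \<and> (\<forall>s \<in># S. fst s \<in> Op) \<and> (\<forall>t \<in> T. \<exists>s \<in># S. covers r (snd s) t)"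

definition cost ::
  "('b \<Rightarrow> real \<times> real) \<Rightarrow> ('b \<Rightarrow> real) \<Rightarrow> 'b set \<Rightarrow> ('b \<times> (real \<times> real)) multiset \<Rightarrow> real" where
  "cost pos c Op S = (\<Sum>k \<in> Op. c k) + (\<Sum>s \<in># S. dist (pos (fst s)) (snd s))"

definition optimal ::
  "real set \<Rightarrow> 'b set \<Rightarrow> ('b \<Rightarrow> real \<times> real) \<Rightarrow> ('b \<Rightarrow> real) \<Rightarrow> real
    \<Rightarrow> 'b set \<Rightarrow> ('b \<times> (real \<times> real)) multiset \<Rightarrow> bool" where
  "optimal T B pos c r Op S \<longleftrightarrow> feasible T B r Op S \<and>
     (\<forall>Op' S'. feasible T B r Op' S' \<longrightarrow> cost pos c Op S \<le> cost pos c Op' S')"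

definition covered_targets :: "real set \<Rightarrow> real \<Rightarrow> real \<times> real \<Rightarrow> real set" where
  "covered_targets T r p = {t \<in> T. covers r p t}"

(* target interval [x(t_i), x(t_j)] of a sensor at p (meaningful if it covers some target) *)
definition interval_left :: "real set \<Rightarrow> real \<Rightarrow> real \<times> real \<Rightarrow> real" where
  "interval_left T r p = Min (covered_targets T r p)"

definition interval_right :: "real set \<Rightarrow> real \<Rightarrow> real \<times> real \<Rightarrow> real" where
  "interval_right T r p = Max (covered_targets T r p)"

definition contiguous_property ::
  "real set \<Rightarrow> real \<Rightarrow> 'b set \<Rightarrow> ('b \<times> (real \<times> real)) multiset \<Rightarrow> bool" where
  "contiguous_property T r Op S \<longleftrightarrow>
    (\<forall>k \<in> Op. \<forall>u v.
       u \<in># S \<and> fst u = k \<and> covered_targets T r (snd u) \<noteq> {} \<and>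
       v \<in># S \<and> fst v = k \<and> covered_targets T r (snd v) \<noteq> {} \<and>
       (\<forall>w \<in># S. fst w = k \<and> covered_targets T r (snd w) \<noteq> {} \<longrightarrow>
           interval_left T r (snd u) \<le> interval_left T r (snd w)) \<and>
       (\<forall>w \<in># S. fst w = k \<and> covered_targets T r (snd w) \<noteq> {} \<longrightarrow>
           interval_right T r (snd w) \<le> interval_right T r (snd v))
       \<longrightarrow> (\<forall>t \<in> T. interval_left T r (snd u) \<le> t \<and> t \<le> interval_right T r (snd v)
              \<longrightarrow> (\<exists>w \<in># S. fst w = k \<and> covers r (snd w) t)))"

end

theory Submission
  imports Defs
begin


lemma dist2: "(dist (a::real,b::real) (c,d))\<^sup>2 = (a-c)\<^sup>2 + (b-d)\<^sup>2"
  by (simp add: dist_Pair_Pair dist_real_def)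

lemma dist_eq_sqrt: "dist (a::real,b::real) (c,d) = sqrt ((a-c)\<^sup>2 + (b-d)\<^sup>2)"
  by (simp add: dist_Pair_Pair dist_real_def)

definition Lam :: "real \<Rightarrow> real \<Rightarrow> real \<Rightarrow> (real \<times> real) set" where
  "Lam r e f = cball (e,0) r \<inter> cball (f,0) r"

lemma le_dist_iff: "0 \<le> r \<Longrightarrow> (dist x y \<le> r) = ((dist x y)\<^sup>2 \<le> r\<^sup>2)"
  by (meson zero_le_dist power2_le_imp_le power_mono)

lemma covers_between:
  assumes "covers r w t1" "covers r w t2" "t1 \<le> t" "t \<le> t2"
  shows "covers r w t"
proof -
  obtain w1 w2 where w: "w = (w1,w2)" by (cases w)
  have r: "0 \<le> r" using assms(1) unfolding covers_def by (meson zero_le_dist order_trans)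
  have a: "(w1-t1)\<^sup>2 + w2\<^sup>2 \<le> r\<^sup>2" using assms(1) r unfolding covers_def w
    by (simp add: le_dist_iff dist2)
  have b: "(w1-t2)\<^sup>2 + w2\<^sup>2 \<le> r\<^sup>2" using assms(2) r unfolding covers_def w
    by (simp add: le_dist_iff dist2)
  have "(w1-t)\<^sup>2 \<le> (w1-t1)\<^sup>2 \<or> (w1-t)\<^sup>2 \<le> (w1-t2)\<^sup>2"
  proof (cases "w1 \<le> t")
    case True then have "0 \<le> t - w1" "t - w1 \<le> t2 - w1" using assms by auto
    then have "(t-w1)\<^sup>2 \<le> (t2-w1)\<^sup>2" by (simp add: power_mono)
    then show ?thesis by (simp add: power2_commute)
  next
    case False then have "0 \<le> w1 - t" "w1 - t \<le> w1 - t1" using assms by auto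
    then have "(w1-t)\<^sup>2 \<le> (w1-t1)\<^sup>2" by (simp add: power_mono)
    then show ?thesis by simp
  qed
  then have "(w1-t)\<^sup>2 + w2\<^sup>2 \<le> r\<^sup>2" using a b by auto
  then show ?thesis unfolding covers_def w by (simp add: le_dist_iff[OF r] dist2)
qed

lemma Lam_covers: assumes "w \<in> Lam r e f" "e \<le> t" "t \<le> f" shows "covers r w t"
proof -
  have "covers r w e" "covers r w f" using assms(1) unfolding Lam_def covers_def
    by (auto simp: dist_commute)
  then show ?thesis using covers_between assms(2,3) by blast
qed

lemma Lam_nonempty: assumes "e \<le> f" "f - e \<le> 2*r" shows "((e+f)/2, 0) \<in> Lam r e f"
proof -
  have "dist ((e+f)/2, 0::real) (e,0) = (f-e)/2" "dist ((e+f)/2, 0::real) (f,0) = (f-e)/2"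
    using assms by (simp_all add: dist_Pair_Pair dist_real_def)
  then show ?thesis using assms unfolding Lam_def by (auto simp: dist_commute)
qed

lemma Lam_mono: assumes "e \<le> e'" "e' \<le> f'" "f' \<le> f" shows "Lam r e f \<subseteq> Lam r e' f'"
proof
  fix w assume w: "w \<in> Lam r e f"
  have "covers r w e'" "covers r w f'" using Lam_covers[OF w] assms by auto
  then show "w \<in> Lam r e' f'" unfolding Lam_def covers_def by (auto simp: dist_commute)
qed


lemma stewart:
  fixes x1 x2 e f l :: real
  shows "(dist (x1,x2) ((1-l)*e + l*f, 0))\<^sup>2
     = (1-l)*(dist (x1,x2) (e,0))\<^sup>2 + l*(dist (x1,x2) (f,0))\<^sup>2 - l*(1-l)*(f-e)\<^sup>2"
  unfolding dist2 by (simp add: power2_eq_square algebra_simps)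

lemma stewart':
  fixes X :: "real \<times> real" and e f l :: real
  shows "(dist X ((1-l)*e + l*f, 0))\<^sup>2
     = (1-l)*(dist X (e,0))\<^sup>2 + l*(dist X (f,0))\<^sup>2 - l*(1-l)*(f-e)\<^sup>2"
  by (cases X) (simp only: stewart)

lemma finish:
  fixes P Q y w :: "real \<times> real"
  assumes l: "0 \<le> l" "l \<le> 1" and R: "0 \<le> R" "R\<^sup>2 = r\<^sup>2 - l*(1-l)*(f-e)\<^sup>2" and r: "0 \<le> r"
    and y: "y \<in> Lam r e f"
    and PG: "dist P w + R \<le> dist P ((1-l)*e + l*f, 0)"
    and dE: "dist P (e,0) \<le> dist Q (e,0)" and dF: "dist P (f,0) \<le> dist Q (f,0)"
  shows "dist P w \<le> dist Q y"
proof -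
  define G where "G = ((1-l)*e + l*f, 0::real)"
  have ye: "(dist y (e,0))\<^sup>2 \<le> r\<^sup>2" and yf: "(dist y (f,0))\<^sup>2 \<le> r\<^sup>2"
    using y r unfolding Lam_def by (auto simp: dist_commute intro: power_mono)
  have "(dist y G)\<^sup>2 = (1-l)*(dist y (e,0))\<^sup>2 + l*(dist y (f,0))\<^sup>2 - l*(1-l)*(f-e)\<^sup>2"
    unfolding G_def by (rule stewart')
  also have "\<dots> \<le> (1-l)*r\<^sup>2 + l*r\<^sup>2 - l*(1-l)*(f-e)\<^sup>2"
    using ye yf l by (intro diff_right_mono add_mono mult_left_mono) auto
  also have "\<dots> = R\<^sup>2" using R by (simp add: algebra_simps)
  finally have "dist y G \<le> R" using R(1) by (rule power2_le_imp_le)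
  have e2: "(dist P (e,0))\<^sup>2 \<le> (dist Q (e,0))\<^sup>2" using dE by (simp add: power_mono)
  have f2: "(dist P (f,0))\<^sup>2 \<le> (dist Q (f,0))\<^sup>2" using dF by (simp add: power_mono)
  have "(dist P G)\<^sup>2 = (1-l)*(dist P (e,0))\<^sup>2 + l*(dist P (f,0))\<^sup>2 - l*(1-l)*(f-e)\<^sup>2"
    unfolding G_def by (rule stewart')
  also have "\<dots> \<le> (1-l)*(dist Q (e,0))\<^sup>2 + l*(dist Q (f,0))\<^sup>2 - l*(1-l)*(f-e)\<^sup>2"
    using e2 f2 l by (intro diff_right_mono add_mono mult_left_mono) auto
  also have "\<dots> = (dist Q G)\<^sup>2" unfolding G_def by (rule stewart'[symmetric])
  finally have "dist P G \<le> dist Q G" by (rule power2_le_imp_le) simp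
  moreover have "dist Q G \<le> dist Q y + dist y G" by (rule dist_triangle)
  ultimately show ?thesis using PG \<open>dist y G \<le> R\<close> unfolding G_def by linarith
qed


lemma sq_eq_imp_eq: "(a::real)\<^sup>2 = b\<^sup>2 \<Longrightarrow> 0 \<le> a \<Longrightarrow> 0 \<le> b \<Longrightarrow> a = b"
  by (rule power2_eq_imp_eq)

lemma dist_sq_eq: "(dist x y)\<^sup>2 = b\<^sup>2 \<Longrightarrow> 0 \<le> b \<Longrightarrow> dist x y = b"
  by (rule power2_eq_imp_eq) auto



lemma arc_case:
  fixes p q dE k :: real
  assumes dE2: "dE\<^sup>2 = (p-e)\<^sup>2 + q\<^sup>2" and dEr: "r < dE" and r: "0 \<le> r"
    and T: "(f-e)*((f-e)*dE - 2*r*(p-e)) \<le> 0"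
    and k: "k = r/dE"
  shows "(e + k*(p-e), k*q) \<in> Lam r e f \<and> dist (p,q) (e + k*(p-e), k*q) = dE - r"
proof -
  have dEpos: "0 < dE" using dEr r by linarith
  have kd: "k * dE = r" using dEpos k by simp
  have k2: "k\<^sup>2 * dE\<^sup>2 = r\<^sup>2" using kd by (simp flip: power_mult_distrib)
  have "(dist (e + k*(p-e), k*q) (e,0))\<^sup>2 = k\<^sup>2 * ((p-e)\<^sup>2 + q\<^sup>2)"
    unfolding dist2 by (simp add: power2_eq_square algebra_simps)
  also have "\<dots> = r\<^sup>2" using k2 dE2 by simp
  finally have wE: "dist (e + k*(p-e), k*q) (e,0) \<le> r" by (simp add: le_dist_iff[OF r])
  have "(dist (e + k*(p-e), k*q) (f,0))\<^sup>2 = (f-e)\<^sup>2 - 2*(f-e)*k*(p-e) + k\<^sup>2 * ((p-e)\<^sup>2 + q\<^sup>2)"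
    unfolding dist2 by (simp add: power2_eq_square algebra_simps)
  also have "\<dots> = r\<^sup>2 + (f-e)*((f-e)*dE - 2*r*(p-e))/dE"
  proof -
    have b: "(f-e)*((f-e)*dE - 2*r*(p-e))/dE = (f-e)\<^sup>2 - 2*(f-e)*k*(p-e)"
      using dEpos unfolding k by (simp add: field_simps power2_eq_square)
    show ?thesis using b k2 dE2 by simp
  qed
  also have "\<dots> \<le> r\<^sup>2"
  proof -
    have "(f-e)*((f-e)*dE - 2*r*(p-e))/dE \<le> 0" using T dEpos by (simp add: divide_nonpos_pos)
    thus ?thesis by simp
  qed
  finally have wF: "dist (e + k*(p-e), k*q) (f,0) \<le> r" by (simp add: le_dist_iff[OF r])
  have wL: "(e + k*(p-e), k*q) \<in> Lam r e f" using wE wF unfolding Lam_def by (simp add: dist_commute)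
  have "(dist (p,q) (e + k*(p-e), k*q))\<^sup>2 = (1-k)\<^sup>2 * ((p-e)\<^sup>2 + q\<^sup>2)"
    unfolding dist2 by (simp add: power2_eq_square algebra_simps)
  also have "\<dots> = ((1-k)*dE)\<^sup>2" unfolding dE2[symmetric] by (simp add: power_mult_distrib)
  also have "(1-k)*dE = dE - r" using kd by (simp add: algebra_simps)
  
  finally have pw0: "(dist (p,q) (e + k*(p-e), k*q))\<^sup>2 = (dE - r)\<^sup>2" .
  have "dist (p,q) (e + k*(p-e), k*q) = dE - r" using dist_sq_eq[OF pw0] dEr by simp
  thus ?thesis using wL by simp
qed



lemma key_ineq:
  fixes p q dE \<delta> h r :: real
  assumes dE2: "dE\<^sup>2 = (p-e)\<^sup>2 + q\<^sup>2" and dE0: "0 \<le> dE" and ineq: "\<delta>*dE > r*(p-e)"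
    and pe: "p - e \<ge> \<delta>" and \<delta>0: "0 \<le> \<delta>" and r: "0 \<le> r" and h2: "h\<^sup>2 = r\<^sup>2 - \<delta>\<^sup>2" and h0: "0 \<le> h"
  shows "h*(p-e) < \<delta>*\<bar>q\<bar>"
proof -
  have a: "0 \<le> r*(p-e)" using r pe \<delta>0 by simp
  have "(r*(p-e))\<^sup>2 < (\<delta>*dE)\<^sup>2" using power_strict_mono[OF ineq a, of 2] by simp
  hence "r\<^sup>2*(p-e)\<^sup>2 < \<delta>\<^sup>2*((p-e)\<^sup>2 + q\<^sup>2)" by (simp add: power_mult_distrib dE2)
  hence "(h\<^sup>2 + \<delta>\<^sup>2)*(p-e)\<^sup>2 < \<delta>\<^sup>2*((p-e)\<^sup>2 + q\<^sup>2)" using h2 by simp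
  hence "h\<^sup>2*(p-e)\<^sup>2 < \<delta>\<^sup>2*q\<^sup>2" by (simp add: algebra_simps)
  hence "(h*(p-e))\<^sup>2 < (\<delta>*\<bar>q\<bar>)\<^sup>2" by (simp add: power_mult_distrib)
  thus ?thesis by (rule power_less_imp_less_base) (use \<delta>0 in simp)
qed

lemma cusp_case:
  fixes p q \<delta> h r :: real
  assumes fe: "f - e = 2*\<delta>" and \<delta>pos: "0 < \<delta>" and h0: "0 \<le> h" and h2: "h\<^sup>2 = r\<^sup>2 - \<delta>\<^sup>2"
    and key: "h*(p-e) < \<delta>*\<bar>q\<bar>" and pm: "e + f \<le> 2*p" and r: "0 \<le> r"
  shows "\<exists>l R C. 0 \<le> l \<and> l \<le> 1 \<and> 0 \<le> R \<and> R\<^sup>2 = r\<^sup>2 - l*(1-l)*(f-e)\<^sup>2 \<and> C \<in> Lam r e f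
     \<and> dist (p,q) C + R \<le> dist (p,q) ((1-l)*e + l*f, 0)"
proof -
  define q' where "q' = \<bar>q\<bar>"
  have pe: "p - e \<ge> \<delta>" using pm fe by linarith
  have "h*\<delta> \<le> h*(p-e)" using pe h0 by (rule mult_left_mono)
  hence "\<delta>*h < \<delta>*q'" using key unfolding q'_def by (simp add: mult.commute)
  hence qh: "h < q'" using \<delta>pos by simp
  define sh where "sh = (if q \<ge> 0 then h else -h)"
  define m where "m = (e+f)/2"
  define \<tau> where "\<tau> = h/(q'-h)"
  have \<tau>0: "0 \<le> \<tau>" using qh h0 by (simp add: \<tau>_def)
  have \<tau>h: "\<tau>*(q'-h) = h" using qh by (simp add: \<tau>_def)
  define g where "g = m - \<tau>*(p-m)"
  have pm': "p - m \<ge> 0" using pm by (simp add: m_def)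
  have gm: "g \<le> m" using \<tau>0 pm' by (simp add: g_def)
  have me: "m = e + \<delta>" using fe unfolding m_def by (simp add: field_simps)
  have "h*(p-m) = h*(p-e) - \<delta>*h" "\<delta>*(q'-h) = \<delta>*q' - \<delta>*h" unfolding me by (simp_all add: algebra_simps)
  hence hpm: "h*(p-m) \<le> \<delta>*(q'-h)" using key unfolding q'_def by linarith
  have "\<tau>*(q'-h)*(p-m) \<le> \<delta>*(q'-h)" using hpm \<tau>h by simp
  hence "(q'-h)*(\<tau>*(p-m)) \<le> (q'-h)*\<delta>" by (simp add: algebra_simps)
  hence "\<tau>*(p-m) \<le> \<delta>" using qh by simp
  hence eg: "e \<le> g" using me unfolding g_def by linarith
  define l where "l = (g-e)/(f-e)"
  have fe0: "f - e > 0" using fe \<delta>pos by simp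
  have lfe: "l*(f-e) = g - e" using fe0 unfolding l_def by simp
  have "(1-l)*e + l*f = e + l*(f-e)" by (simp add: algebra_simps)
  hence lG: "(1-l)*e + l*f = g" using lfe by simp
  have l0: "0 \<le> l" using eg fe0 unfolding l_def by simp
  have l1: "l \<le> 1" using gm fe0 unfolding l_def m_def by (simp add: field_simps)
  define C where "C = (m, sh)"
  have sh2: "sh\<^sup>2 = h\<^sup>2" by (simp add: sh_def)
  have mf: "m = f - \<delta>" using fe me by simp
  have CE2: "(dist C (e,0))\<^sup>2 = r\<^sup>2" unfolding C_def dist2 using sh2 h2 me by simp
  have CF2: "(dist C (f,0))\<^sup>2 = r\<^sup>2" unfolding C_def dist2 using sh2 h2 mf by simp
  have CL: "C \<in> Lam r e f" using CE2 CF2 unfolding Lam_def by (simp add: dist_commute le_dist_iff[OF r])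
  have qsh2: "(q - sh)\<^sup>2 = (q'-h)\<^sup>2" unfolding sh_def q'_def by (auto simp: power2_eq_square algebra_simps)
  have q2: "q\<^sup>2 = q'\<^sup>2" unfolding q'_def by simp
  define D where "D = dist (p,q) C"
  have D2: "D\<^sup>2 = (p-m)\<^sup>2 + (q'-h)\<^sup>2" unfolding D_def C_def dist2 qsh2 by simp
  have D0: "0 \<le> D" unfolding D_def by simp
  define R where "R = dist C (g,0)"
  have mg: "m - g = \<tau>*(p-m)" by (simp add: g_def)
  have "R\<^sup>2 = (m-g)\<^sup>2 + h\<^sup>2" unfolding R_def C_def dist2 using sh2 by simp
  also have "\<dots> = (\<tau>*(p-m))\<^sup>2 + (\<tau>*(q'-h))\<^sup>2" unfolding mg \<tau>h ..
  also have "\<dots> = (\<tau>*D)\<^sup>2" unfolding power_mult_distrib D2 by (simp add: algebra_simps)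
  finally have RD0: "R\<^sup>2 = (\<tau>*D)\<^sup>2" .
  have RD: "R = \<tau>*D" unfolding R_def by (rule dist_sq_eq) (use RD0 \<tau>0 D0 in \<open>simp_all add: R_def\<close>)
  have pg: "p - g = (1+\<tau>)*(p-m)" by (simp add: g_def algebra_simps)
  have q'e: "q' = (1+\<tau>)*(q'-h)" using \<tau>h by (simp add: algebra_simps)
  have "(dist (p,q) (g,0))\<^sup>2 = (p-g)\<^sup>2 + q'\<^sup>2" unfolding dist2 using q2 by simp
  also have "\<dots> = ((1+\<tau>)*(p-m))\<^sup>2 + ((1+\<tau>)*(q'-h))\<^sup>2" using pg q'e by simp
  also have "\<dots> = ((1+\<tau>)*D)\<^sup>2" unfolding power_mult_distrib D2 by (simp add: algebra_simps)
  finally have GD0: "(dist (p,q) (g,0))\<^sup>2 = ((1+\<tau>)*D)\<^sup>2" .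
  have GD: "dist (p,q) (g,0) = (1+\<tau>)*D" by (rule dist_sq_eq[OF GD0]) (use \<tau>0 D0 in simp)
  have "R\<^sup>2 = (m-g)\<^sup>2 + h\<^sup>2" unfolding R_def C_def dist2 using sh2 by simp
  also have "\<dots> = r\<^sup>2 - l*(1-l)*(f-e)\<^sup>2"
  proof -
    have "m - g = \<delta> - l*(2*\<delta>)" using me lfe fe by simp
    hence a: "(m-g)\<^sup>2 = (\<delta> - l*(2*\<delta>))\<^sup>2" by simp
    have b: "(\<delta> - l*(2*\<delta>))\<^sup>2 + (r\<^sup>2 - \<delta>\<^sup>2) = r\<^sup>2 - l*(1-l)*(2*\<delta>)\<^sup>2"
      by (simp add: power2_eq_square algebra_simps)
    show ?thesis unfolding a h2 fe b ..
  qed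
  finally have R2: "R\<^sup>2 = r\<^sup>2 - l*(1-l)*(f-e)\<^sup>2" .
  have R0: "0 \<le> R" unfolding R_def by simp
  have "dist (p,q) C + R \<le> dist (p,q) ((1-l)*e + l*f, 0)" unfolding lG GD RD D_def
    by (simp add: algebra_simps)
  thus ?thesis using l0 l1 R0 R2 CL by blast
qed



lemma lensC_half:
  fixes p q :: real and Q y :: "real \<times> real"
  assumes ef: "e \<le> f" "f - e \<le> 2*r" and r: "0 \<le> r" and pm: "e + f \<le> 2*p"
    and hE: "dist (p,q) (e,0) \<le> dist Q (e,0)" and hF: "dist (p,q) (f,0) \<le> dist Q (f,0)"
    and y: "y \<in> Lam r e f"
  shows "\<exists>w\<in>Lam r e f. dist (p,q) w \<le> dist Q y"
proof (cases "(p,q) \<in> Lam r e f")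
  case True
  have "dist (p,q) (p,q) \<le> dist Q y" by simp
  thus ?thesis using True by (rule bexI)
next
  case False
  define dE where "dE = dist (p,q) (e,0)"
  define \<delta> where "\<delta> = (f-e)/2"
  have \<delta>0: "0 \<le> \<delta>" and \<delta>r: "\<delta> \<le> r" using ef by (auto simp: \<delta>_def)
  have fe: "f - e = 2*\<delta>" by (simp add: \<delta>_def)
  have dE2: "dE\<^sup>2 = (p-e)\<^sup>2 + q\<^sup>2" unfolding dE_def dist2 by simp
  have dE0: "0 \<le> dE" unfolding dE_def by simp
  have pe: "p - e \<ge> \<delta>" using pm by (simp add: \<delta>_def field_simps)
  have "\<bar>p - f\<bar> \<le> \<bar>p - e\<bar>" using pm ef by auto
  hence "(p-f)\<^sup>2 \<le> (p-e)\<^sup>2" by (simp only: abs_le_square_iff)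
  hence "(dist (p,q) (f,0))\<^sup>2 \<le> dE\<^sup>2" unfolding dE2 dist2 by simp
  hence dFE: "dist (p,q) (f,0) \<le> dE" using dE0 by (rule power2_le_imp_le)
  have dEr: "dE > r"
  proof (rule ccontr)
    assume "\<not> r < dE"
    hence "dist (p,q) (e,0) \<le> r" "dist (p,q) (f,0) \<le> r" using dFE by (auto simp: dE_def)
    hence "(p,q) \<in> Lam r e f" unfolding Lam_def by (simp add: dist_commute)
    thus False using False by simp
  qed
  show ?thesis
  proof (cases "(f-e)*((f-e)*dE - 2*r*(p-e)) \<le> 0")
    case True
    define k where "k = r/dE"
    have A: "(e + k*(p-e), k*q) \<in> Lam r e f \<and> dist (p,q) (e + k*(p-e), k*q) = dE - r"
      by (rule arc_case[OF dE2 dEr r True k_def])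
    have PG: "dist (p,q) (e + k*(p-e), k*q) + r \<le> dist (p,q) ((1-0)*e + 0*f, 0)"
      using A by (simp add: dE_def)
    have "dist (p,q) (e + k*(p-e), k*q) \<le> dist Q y"
      by (rule finish[OF _ _ _ _ r y PG hE hF]) (use r in simp_all)
    thus ?thesis using A by blast
  next
    case False
    have \<delta>pos: "\<delta> > 0" using False \<delta>0 fe by (cases "\<delta> = 0") auto
    have "(f-e)*dE - 2*r*(p-e) > 0" using False fe \<delta>pos by (simp add: mult_le_0_iff) 
    hence ineq: "\<delta>*dE > r*(p-e)" using fe by simp
    define h where "h = sqrt (r\<^sup>2 - \<delta>\<^sup>2)"
    have dr2: "\<delta>\<^sup>2 \<le> r\<^sup>2" using power_mono[OF \<delta>r \<delta>0, of 2] by simp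
    have d0: "0 \<le> r\<^sup>2 - \<delta>\<^sup>2" using dr2 by linarith
    hence h2: "h\<^sup>2 = r\<^sup>2 - \<delta>\<^sup>2" unfolding h_def by (rule real_sqrt_pow2)
    have h0: "0 \<le> h" unfolding h_def using d0 by simp
    have key: "h*(p-e) < \<delta>*\<bar>q\<bar>" by (rule key_ineq[OF dE2 dE0 ineq pe \<delta>0 r h2 h0])
    obtain l R C where lRC: "0 \<le> l" "l \<le> 1" "0 \<le> R" "R\<^sup>2 = r\<^sup>2 - l*(1-l)*(f-e)\<^sup>2" "C \<in> Lam r e f"
      "dist (p,q) C + R \<le> dist (p,q) ((1-l)*e + l*f, 0)"
      using cusp_case[OF fe \<delta>pos h0 h2 key pm r] by blast
    have "dist (p,q) C \<le> dist Q y"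
      by (rule finish[OF lRC(1) lRC(2) lRC(3) lRC(4) r y lRC(6) hE hF])
    thus ?thesis using lRC by blast
  qed
qed

definition mir :: "real \<Rightarrow> real \<Rightarrow> real \<times> real \<Rightarrow> real \<times> real" where
  "mir e f z = (e + f - fst z, snd z)"

lemma dist_mir: "dist (mir e f a) (mir e f b) = dist a b"
  by (cases a, cases b) (simp add: mir_def dist_eq_sqrt power2_commute)

lemma mir_mir: "mir e f (mir e f a) = a" by (cases a) (simp add: mir_def)
lemma mir_e: "mir e f (e,0) = (f,0)" by (simp add: mir_def)
lemma mir_f: "mir e f (f,0) = (e,0)" by (simp add: mir_def)

lemma mir_Lam: "a \<in> Lam r e f \<Longrightarrow> mir e f a \<in> Lam r e f"
  unfolding Lam_def using dist_mir[of e f a "(e,0)"] dist_mir[of e f a "(f,0)"]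
  by (simp add: mir_e mir_f dist_commute)

lemma lensC_ex:
  fixes P Q y :: "real \<times> real"
  assumes ef: "e \<le> f" "f - e \<le> 2*r" and r: "0 \<le> r"
    and hE: "dist P (e,0) \<le> dist Q (e,0)" and hF: "dist P (f,0) \<le> dist Q (f,0)"
    and y: "y \<in> Lam r e f"
  shows "\<exists>w\<in>Lam r e f. dist P w \<le> dist Q y"
proof (cases "e + f \<le> 2 * fst P")
  case True
  obtain p q where P: "P = (p,q)" by (cases P)
  show ?thesis using lensC_half[OF ef r _ hE[unfolded P] hF[unfolded P] y] True P by simp
next
  case False
  define P' where "P' = mir e f P"
  define Q' where "Q' = mir e f Q"
  obtain p q where P': "P' = (p,q)" by (cases P')
  have pm: "e + f \<le> 2*p" using False P' unfolding P'_def mir_def by auto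
  have hE': "dist (p,q) (e,0) \<le> dist Q' (e,0)"
    using hF dist_mir[of e f P "(f,0)"] dist_mir[of e f Q "(f,0)"] unfolding P'[symmetric] P'_def Q'_def mir_f by simp
  have hF': "dist (p,q) (f,0) \<le> dist Q' (f,0)"
    using hE dist_mir[of e f P "(e,0)"] dist_mir[of e f Q "(e,0)"] unfolding P'[symmetric] P'_def Q'_def mir_e by simp
  obtain w where w: "w \<in> Lam r e f" "dist (p,q) w \<le> dist Q' (mir e f y)"
    using lensC_half[OF ef r pm hE' hF' mir_Lam[OF y]] by blast
  have "dist P (mir e f w) = dist (p,q) w"
    using dist_mir[of e f P' w] unfolding P'[symmetric] P'_def mir_mir by simp
  moreover have "dist Q' (mir e f y) = dist Q y" unfolding Q'_def by (rule dist_mir)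
  ultimately have "dist P (mir e f w) \<le> dist Q y" using w by simp
  thus ?thesis using mir_Lam[OF w(1)] by blast
qed



definition cp :: "real \<Rightarrow> real \<times> real \<Rightarrow> real \<Rightarrow> real \<Rightarrow> real \<times> real" where
  "cp r P e f = (SOME w. w \<in> Lam r e f \<and> (\<forall>y\<in>Lam r e f. dist P w \<le> dist P y))"

definition gd :: "real \<Rightarrow> real \<times> real \<Rightarrow> real \<Rightarrow> real \<Rightarrow> real" where
  "gd r P e f = dist P (cp r P e f)"

lemma closed_Lam: "closed (Lam r e f)" unfolding Lam_def by (intro closed_Int closed_cball)

lemma cp_prop:
  assumes "e \<le> f" "f - e \<le> 2*r"
  shows "cp r P e f \<in> Lam r e f \<and> (\<forall>y\<in>Lam r e f. dist P (cp r P e f) \<le> dist P y)"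
proof -
  have ne: "Lam r e f \<noteq> {}" using Lam_nonempty[OF assms] by blast
  obtain x where "x \<in> Lam r e f" "\<And>y. y \<in> Lam r e f \<Longrightarrow> dist P x \<le> dist P y"
    using distance_attains_inf[OF closed_Lam ne, of P] by blast
  hence "\<exists>w. w \<in> Lam r e f \<and> (\<forall>y\<in>Lam r e f. dist P w \<le> dist P y)" by blast
  thus ?thesis unfolding cp_def by (rule someI_ex)
qed

lemma gd_le: "e \<le> f \<Longrightarrow> f - e \<le> 2*r \<Longrightarrow> y \<in> Lam r e f \<Longrightarrow> gd r P e f \<le> dist P y"
  unfolding gd_def using cp_prop by blast

lemma gd_nonneg: "0 \<le> gd r P e f" unfolding gd_def by simp

lemma gd_lensC:
  assumes "e \<le> f" "f - e \<le> 2*r" "0 \<le> r"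
    "dist P (e,0) \<le> dist Q (e,0)" "dist P (f,0) \<le> dist Q (f,0)"
  shows "gd r P e f \<le> gd r Q e f"
proof -
  have "cp r Q e f \<in> Lam r e f" using cp_prop[OF assms(1,2)] by blast
  then obtain w where "w \<in> Lam r e f" "dist P w \<le> dist Q (cp r Q e f)"
    using lensC_ex[OF assms(1,2,3,4,5)] by blast
  thus ?thesis using gd_le[OF assms(1,2)] unfolding gd_def[of r Q] by (meson order_trans)
qed

lemma gd_mono:
  assumes "e \<le> e'" "e' \<le> f'" "f' \<le> f" "f - e \<le> 2*r"
  shows "gd r P e' f' \<le> gd r P e f"
proof -
  have "cp r P e f \<in> Lam r e f" using cp_prop[of e f r P] assms by auto
  hence "cp r P e f \<in> Lam r e' f'" using Lam_mono[OF assms(1-3)] by blast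
  thus ?thesis using gd_le[of e' f' r _ P] assms unfolding gd_def[of r P e f] by auto
qed

definition Adiff :: "real \<times> real \<Rightarrow> real \<times> real \<Rightarrow> real \<Rightarrow> real" where
  "Adiff P Q s = (dist P (s,0))\<^sup>2 - (dist Q (s,0))\<^sup>2"

lemma Adiff_affine:
  "(s3-s1) * Adiff P Q s2 = (s3-s2) * Adiff P Q s1 + (s2-s1) * Adiff P Q s3"
proof -
  obtain p1 p2 q1 q2 where PQ: "P = (p1,p2)" "Q = (q1,q2)" by (cases P, cases Q)
  show ?thesis unfolding PQ Adiff_def dist2 by (simp add: power2_eq_square algebra_simps)
qed

lemma Adiff_swap: "Adiff Q P s = - Adiff P Q s" by (simp add: Adiff_def)

lemma Adiff_neg_iff: "Adiff P Q s < 0 \<longleftrightarrow> dist P (s,0) < dist Q (s,0)"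
proof -
  have "Adiff P Q s < 0 \<longleftrightarrow> (dist P (s,0))\<^sup>2 < (dist Q (s,0))\<^sup>2" by (simp add: Adiff_def)
  also have "\<dots> \<longleftrightarrow> dist P (s,0) < dist Q (s,0)"
  proof
    assume "(dist P (s,0))\<^sup>2 < (dist Q (s,0))\<^sup>2"
    thus "dist P (s,0) < dist Q (s,0)" by (rule power2_less_imp_less) simp
  next
    assume "dist P (s,0) < dist Q (s,0)"
    thus "(dist P (s,0))\<^sup>2 < (dist Q (s,0))\<^sup>2" by (rule power_strict_mono) simp_all
  qed
  finally show ?thesis .
qed



locale inst =
  fixes T :: "real set" and B :: "'b set" and pos :: "'b \<Rightarrow> real \<times> real"
    and c :: "'b \<Rightarrow> real" and r :: real and rank :: "'b \<Rightarrow> nat"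
  assumes finT: "finite T" and finB: "finite B" and Bne: "B \<noteq> {}" and r0: "0 \<le> r"
    and rank: "inj_on rank B"
begin

definition key1 where "key1 k J = gd r (pos k) (fst J) (snd J)"
definition psi where "psi k J = (dist (pos k) ((fst J + snd J)/2, 0))\<^sup>2"
definition isbest where
  "isbest Op J k \<longleftrightarrow> k \<in> Op \<and> (\<forall>k'\<in>Op. key1 k J \<le> key1 k' J
     \<and> (key1 k J = key1 k' J \<longrightarrow> psi k J \<le> psi k' J)
     \<and> (key1 k J = key1 k' J \<and> psi k J = psi k' J \<longrightarrow> rank k \<le> rank k'))"
definition lab where "lab Op J = (SOME k. isbest Op J k)"
definition Iv where "Iv = {J. fst J \<in> T \<and> snd J \<in> T \<and> fst J \<le> snd J \<and> snd J - fst J \<le> 2*r}"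

lemma best_exists:
  assumes "Op \<subseteq> B" "Op \<noteq> {}" shows "\<exists>k. isbest Op J k"
proof -
  have fin: "finite Op" using assms(1) finB by (rule finite_subset)
  define M1 where "M1 = {k\<in>Op. key1 k J = Min ((\<lambda>k. key1 k J) ` Op)}"
  have "Min ((\<lambda>k. key1 k J) ` Op) \<in> (\<lambda>k. key1 k J) ` Op" using fin assms(2) by (intro Min_in) auto
  hence M1ne: "M1 \<noteq> {}" unfolding M1_def by force
  have fin1: "finite M1" using fin unfolding M1_def by simp
  define M2 where "M2 = {k\<in>M1. psi k J = Min ((\<lambda>k. psi k J) ` M1)}"
  have "Min ((\<lambda>k. psi k J) ` M1) \<in> (\<lambda>k. psi k J) ` M1" using fin1 M1ne by (intro Min_in) auto
  hence M2ne: "M2 \<noteq> {}" unfolding M2_def by force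
  have fin2: "finite M2" using fin1 unfolding M2_def by simp
  have "Min (rank ` M2) \<in> rank ` M2" using fin2 M2ne by (intro Min_in) auto
  then obtain k where k: "k \<in> M2" "rank k = Min (rank ` M2)" by force
  have "isbest Op J k" unfolding isbest_def
  proof (intro conjI ballI)
    show "k \<in> Op" using k(1) unfolding M2_def M1_def by simp
    fix k' assume k': "k' \<in> Op"
    have k1: "key1 k J = Min ((\<lambda>k. key1 k J) ` Op)" using k(1) unfolding M2_def M1_def by simp
    show "key1 k J \<le> key1 k' J" unfolding k1 using fin k' by (intro Min_le) auto
    show "key1 k J = key1 k' J \<longrightarrow> psi k J \<le> psi k' J"
    proof
      assume "key1 k J = key1 k' J"
      hence "k' \<in> M1" using k' k1 unfolding M1_def by simp
      moreover have "psi k J = Min ((\<lambda>k. psi k J) ` M1)" using k(1) unfolding M2_def by simp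
      ultimately show "psi k J \<le> psi k' J" using fin1 by (simp add: Min_le)
    qed
    show "key1 k J = key1 k' J \<and> psi k J = psi k' J \<longrightarrow> rank k \<le> rank k'"
    proof
      assume a: "key1 k J = key1 k' J \<and> psi k J = psi k' J"
      hence "k' \<in> M1" using k' k1 unfolding M1_def by simp
      moreover have "psi k J = Min ((\<lambda>k. psi k J) ` M1)" using k(1) unfolding M2_def by simp
      ultimately have "k' \<in> M2" using a unfolding M2_def by simp
      thus "rank k \<le> rank k'" unfolding k(2) using fin2 by (simp add: Min_le)
    qed
  qed
  thus ?thesis by blast
qed

lemma lab: "Op \<subseteq> B \<Longrightarrow> Op \<noteq> {} \<Longrightarrow> isbest Op J (lab Op J)"
  unfolding lab_def by (rule someI_ex) (rule best_exists)

lemma witness: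
  assumes Op: "Op \<subseteq> B" and b: "isbest Op J k" and k': "k' \<in> Op" "k' \<noteq> k" and J: "J \<in> Iv"
  shows "\<exists>s. fst J \<le> s \<and> s \<le> snd J \<and> Adiff (pos k) (pos k') s \<le> 0
     \<and> (Adiff (pos k) (pos k') s = 0 \<longrightarrow> rank k < rank k')"
proof -
  obtain e f where Jef: "J = (e,f)" by (cases J)
  have ef: "e \<le> f" "f - e \<le> 2*r" using J unfolding Iv_def Jef by auto
  have kO: "k \<in> Op" using b unfolding isbest_def by simp
  have kk: "key1 k J \<le> key1 k' J" and kp: "key1 k J = key1 k' J \<longrightarrow> psi k J \<le> psi k' J"
    and kr: "key1 k J = key1 k' J \<and> psi k J = psi k' J \<longrightarrow> rank k \<le> rank k'"
    using b k' unfolding isbest_def by auto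
  show ?thesis
  proof (cases "key1 k J < key1 k' J")
    case True
    have "\<not> (dist (pos k') (e,0) \<le> dist (pos k) (e,0) \<and> dist (pos k') (f,0) \<le> dist (pos k) (f,0))"
    proof
      assume "dist (pos k') (e,0) \<le> dist (pos k) (e,0) \<and> dist (pos k') (f,0) \<le> dist (pos k) (f,0)"
      hence "gd r (pos k') e f \<le> gd r (pos k) e f" using gd_lensC[OF ef r0] by blast
      thus False using True unfolding key1_def Jef by simp
    qed
    hence "Adiff (pos k) (pos k') e < 0 \<or> Adiff (pos k) (pos k') f < 0"
      unfolding Adiff_neg_iff by auto
    thus ?thesis using ef unfolding Jef by auto
  next
    case False
    hence eq: "key1 k J = key1 k' J" using kk by simp
    define m where "m = (e+f)/2"
    have m: "e \<le> m" "m \<le> f" using ef unfolding m_def by auto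
    have A: "Adiff (pos k) (pos k') m = psi k J - psi k' J" unfolding Adiff_def psi_def Jef m_def by simp
    have "Adiff (pos k) (pos k') m \<le> 0" using kp eq A by simp
    moreover have "Adiff (pos k) (pos k') m = 0 \<longrightarrow> rank k < rank k'"
    proof
      assume "Adiff (pos k) (pos k') m = 0"
      hence "rank k \<le> rank k'" using kr eq A by simp
      moreover have "rank k \<noteq> rank k'" using rank k' kO Op inj_on_eq_iff by fastforce
      ultimately show "rank k < rank k'" by simp
    qed
    ultimately show ?thesis using m unfolding Jef by auto
  qed
qed

lemma no_pattern:
  assumes Op: "Op \<subseteq> B" "Op \<noteq> {}" and J: "J1 \<in> Iv" "J2 \<in> Iv" "J3 \<in> Iv"
    and ord: "snd J1 < fst J2" "snd J2 < fst J3"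
    and L: "lab Op J1 = k" "lab Op J3 = k" "lab Op J2 = k'" and kk: "k \<noteq> k'"
  shows False
proof -
  have b1: "isbest Op J1 k" and b3: "isbest Op J3 k" and b2: "isbest Op J2 k'"
    using lab[OF Op] L by metis+
  have kO: "k \<in> Op" and k'O: "k' \<in> Op" using b1 b2 unfolding isbest_def by auto
  define A where "A = Adiff (pos k) (pos k')"
  obtain s1 where s1: "fst J1 \<le> s1" "s1 \<le> snd J1" "A s1 \<le> 0" "A s1 = 0 \<longrightarrow> rank k < rank k'"
    using witness[OF Op(1) b1 k'O kk[symmetric] J(1)] unfolding A_def by blast
  obtain s3 where s3: "fst J3 \<le> s3" "s3 \<le> snd J3" "A s3 \<le> 0" "A s3 = 0 \<longrightarrow> rank k < rank k'"
    using witness[OF Op(1) b3 k'O kk[symmetric] J(3)] unfolding A_def by blast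
  obtain s2 where s2: "fst J2 \<le> s2" "s2 \<le> snd J2" "Adiff (pos k') (pos k) s2 \<le> 0"
      "Adiff (pos k') (pos k) s2 = 0 \<longrightarrow> rank k' < rank k"
    using witness[OF Op(1) b2 kO kk J(2)] by blast
  have A2: "A s2 \<ge> 0" and A2': "A s2 = 0 \<longrightarrow> rank k' < rank k"
    using s2(3,4) unfolding A_def Adiff_swap[of "pos k'" "pos k"] by auto
  have lt: "s1 < s2" "s2 < s3" using s1 s2 s3 ord by linarith+
  have aff: "(s3-s1) * A s2 = (s3-s2) * A s1 + (s2-s1) * A s3" unfolding A_def by (rule Adiff_affine)
  have t1: "(s3-s2) * A s1 \<le> 0" using lt s1(3) by (intro mult_nonneg_nonpos) auto
  have t3: "(s2-s1) * A s3 \<le> 0" using lt s3(3) by (intro mult_nonneg_nonpos) auto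
  have t2: "(s3-s1) * A s2 \<ge> 0" using lt A2 by (intro mult_nonneg_nonneg) auto
  have z1: "(s3-s2) * A s1 = 0" using aff t1 t2 t3 by linarith
  have z2: "(s3-s1) * A s2 = 0" using aff t1 t2 t3 by linarith
  have "A s1 = 0" using z1 lt by simp
  moreover have "A s2 = 0" using z2 lt by simp
  ultimately show False using s1(4) A2' by simp
qed

end



lemma sum_set_mset_le:
  fixes f :: "'a \<Rightarrow> real"
  assumes "\<And>x. 0 \<le> f x"
  shows "sum f (set_mset M) \<le> sum_mset (image_mset f M)"
proof (induction M)
  case empty then show ?case by simp
next
  case (add x M)
  have "sum f (set_mset (add_mset x M)) = sum f (insert x (set_mset M))" by simp
  also have "\<dots> \<le> f x + sum f (set_mset M)"
    by (cases "x \<in> set_mset M") (simp_all add: insert_absorb assms)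
  also have "\<dots> \<le> f x + sum_mset (image_mset f M)" using add.IH by simp
  finally show ?case by simp
qed

lemma sum_insert_le:
  fixes g :: "'a \<Rightarrow> real"
  assumes "finite A" "0 \<le> g a"
  shows "sum g (insert a A) \<le> g a + sum g A"
  using assms by (cases "a \<in> A") (simp_all add: insert_absorb)

context inst begin

definition canon where
  "canon Op JJ \<longleftrightarrow> Op \<subseteq> B \<and> JJ \<subseteq> Iv \<and> (\<forall>t\<in>T. \<exists>J\<in>JJ. fst J \<le> t \<and> t \<le> snd J)
     \<and> (JJ \<noteq> {} \<longrightarrow> Op \<noteq> {})"
definition ccost where "ccost Op JJ = (\<Sum>k\<in>Op. c k) + (\<Sum>J\<in>JJ. key1 (lab Op J) J)"
definition wid where "wid JJ = (\<Sum>J\<in>JJ. snd J - fst J) + real (card JJ)"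
definition sens where "sens Op J = (lab Op J, cp r (pos (lab Op J)) (fst J) (snd J))"
definition sol where "sol Op JJ = image_mset (sens Op) (mset_set JJ)"

lemma finite_Iv: "finite Iv"
proof -
  have "Iv \<subseteq> T \<times> T" unfolding Iv_def by auto
  thus ?thesis using finT by (meson finite_SigmaI finite_subset)
qed

lemma canon_fin: "canon Op JJ \<Longrightarrow> finite JJ"
  unfolding canon_def using finite_Iv finite_subset by blast

lemma canon_finOp: "canon Op JJ \<Longrightarrow> finite Op"
  unfolding canon_def using finB finite_subset by blast

lemma key1_nonneg: "0 \<le> key1 k J" unfolding key1_def by (rule gd_nonneg)

lemma sens_in:
  assumes "canon Op JJ" "J \<in> JJ"
  shows "fst (sens Op J) \<in> Op" "snd (sens Op J) \<in> Lam r (fst J) (snd J)"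
proof -
  have "Op \<subseteq> B" "Op \<noteq> {}" using assms unfolding canon_def by auto
  hence "isbest Op J (lab Op J)" by (rule lab)
  thus "fst (sens Op J) \<in> Op" unfolding sens_def isbest_def by simp
  have "J \<in> Iv" using assms unfolding canon_def by auto
  hence "fst J \<le> snd J" "snd J - fst J \<le> 2*r" unfolding Iv_def by auto
  thus "snd (sens Op J) \<in> Lam r (fst J) (snd J)" unfolding sens_def using cp_prop by simp
qed

lemma mem_sol: "canon Op JJ \<Longrightarrow> s \<in># sol Op JJ \<longleftrightarrow> (\<exists>J\<in>JJ. s = sens Op J)"
  unfolding sol_def using canon_fin by auto

lemma feasible_sol: "canon Op JJ \<Longrightarrow> feasible T B r Op (sol Op JJ)"
proof -
  assume C: "canon Op JJ"
  have "Op \<subseteq> B" using C unfolding canon_def by simp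
  moreover have "\<forall>s\<in>#sol Op JJ. fst s \<in> Op"
  proof
    fix s assume "s \<in># sol Op JJ"
    then obtain J where "J \<in> JJ" "s = sens Op J" using mem_sol[OF C] by blast
    thus "fst s \<in> Op" using sens_in(1)[OF C] by simp
  qed
  moreover have "\<forall>t\<in>T. \<exists>s\<in>#sol Op JJ. covers r (snd s) t"
  proof
    fix t assume "t \<in> T"
    then obtain J where J: "J \<in> JJ" "fst J \<le> t" "t \<le> snd J" using C unfolding canon_def by blast
    have "covers r (snd (sens Op J)) t" using Lam_covers[OF sens_in(2)[OF C J(1)] J(2,3)] .
    moreover have "sens Op J \<in># sol Op JJ" using mem_sol[OF C] J(1) by auto
    ultimately show "\<exists>s\<in>#sol Op JJ. covers r (snd s) t" by blast
  qed
  ultimately show ?thesis unfolding feasible_def by blast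
qed

lemma cost_sol: "canon Op JJ \<Longrightarrow> cost pos c Op (sol Op JJ) = ccost Op JJ"
proof -
  assume C: "canon Op JJ"
  have "(\<Sum>s\<in>#sol Op JJ. dist (pos (fst s)) (snd s))
      = sum_mset (image_mset (\<lambda>J. dist (pos (fst (sens Op J))) (snd (sens Op J))) (mset_set JJ))"
    unfolding sol_def by (simp add: multiset.map_comp o_def)
  also have "\<dots> = (\<Sum>J\<in>JJ. dist (pos (fst (sens Op J))) (snd (sens Op J)))"
    by (rule sum_unfold_sum_mset[symmetric])
  also have "\<dots> = (\<Sum>J\<in>JJ. key1 (lab Op J) J)"
    by (simp add: sens_def key1_def gd_def)
  finally show ?thesis unfolding cost_def ccost_def by simp
qed

lemma lower:
  assumes F: "feasible T B r Op' S'"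
  shows "\<exists>JJ. canon Op' JJ \<and> ccost Op' JJ \<le> cost pos c Op' S'"
proof -
  define ct where "ct s = covered_targets T r (snd s)" for s :: "'b \<times> real \<times> real"
  define Scov where "Scov = {s \<in> set_mset S'. ct s \<noteq> {}}"
  define hv where "hv s = (Min (ct s), Max (ct s))" for s
  define JJ where "JJ = hv ` Scov"
  have ctfin: "finite (ct s)" for s unfolding ct_def covered_targets_def using finT by simp
  have ctT: "ct s \<subseteq> T" for s unfolding ct_def covered_targets_def by auto
  have ctcov: "x \<in> ct s \<Longrightarrow> covers r (snd s) x" for x s unfolding ct_def covered_targets_def by auto
  have OpB: "Op' \<subseteq> B" and fstO: "\<forall>s\<in>#S'. fst s \<in> Op'" and cov: "\<forall>t\<in>T. \<exists>s\<in>#S'. covers r (snd s) t"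
    using F unfolding feasible_def by auto
  have hvprop: "fst (hv s) \<in> T \<and> snd (hv s) \<in> T \<and> fst (hv s) \<le> snd (hv s) \<and> snd (hv s) - fst (hv s) \<le> 2*r
       \<and> snd s \<in> Lam r (fst (hv s)) (snd (hv s))" if s: "s \<in> Scov" for s
  proof -
    have ne: "ct s \<noteq> {}" using s unfolding Scov_def by simp
    have mi: "Min (ct s) \<in> ct s" and ma: "Max (ct s) \<in> ct s" using Min_in Max_in ctfin ne by auto
    have le: "Min (ct s) \<le> Max (ct s)" using Min_le[OF ctfin ma] .
    have c1: "dist (snd s) (Min (ct s), 0) \<le> r" using ctcov[OF mi] unfolding covers_def .
    have c2: "dist (snd s) (Max (ct s), 0) \<le> r" using ctcov[OF ma] unfolding covers_def .
    have "dist (Min (ct s), 0::real) (Max (ct s), 0) \<le> dist (Min (ct s), 0::real) (snd s) + dist (snd s) (Max (ct s), 0)"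
      by (rule dist_triangle)
    also have "\<dots> \<le> 2*r" using c1 c2 by (simp add: dist_commute)
    finally have "Max (ct s) - Min (ct s) \<le> 2*r" using le by (simp add: dist_Pair_Pair dist_real_def)
    moreover have "snd s \<in> Lam r (Min (ct s)) (Max (ct s))" using c1 c2 unfolding Lam_def by (simp add: dist_commute)
    moreover have "Min (ct s) \<in> T" "Max (ct s) \<in> T" using mi ma ctT[of s] by auto
    ultimately show ?thesis using le unfolding hv_def by auto
  qed
  have canon: "canon Op' JJ" unfolding canon_def
  proof (intro conjI)
    show "Op' \<subseteq> B" by (rule OpB)
    show "JJ \<subseteq> Iv" unfolding JJ_def Iv_def using hvprop by auto
    show "\<forall>t\<in>T. \<exists>J\<in>JJ. fst J \<le> t \<and> t \<le> snd J"
    proof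
      fix t assume t: "t \<in> T"
      then obtain s where s: "s \<in># S'" "covers r (snd s) t" using cov by blast
      have tc: "t \<in> ct s" using s(2) t unfolding ct_def covered_targets_def by simp
      hence sS: "s \<in> Scov" using s(1) unfolding Scov_def by auto
      have "fst (hv s) \<le> t" "t \<le> snd (hv s)" using tc ctfin unfolding hv_def by auto
      thus "\<exists>J\<in>JJ. fst J \<le> t \<and> t \<le> snd J" using sS unfolding JJ_def by blast
    qed
    show "JJ \<noteq> {} \<longrightarrow> Op' \<noteq> {}" using fstO unfolding JJ_def Scov_def by auto
  qed
  have finS: "finite Scov" unfolding Scov_def by simp
  define d where "d s = dist (pos (fst s)) (snd s)" for s :: "'b \<times> real \<times> real"
  have "(\<Sum>J\<in>JJ. key1 (lab Op' J) J) \<le> (\<Sum>s\<in>Scov. key1 (lab Op' (hv s)) (hv s))"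
    unfolding JJ_def using sum_image_le[OF finS, of "\<lambda>J. key1 (lab Op' J) J" hv] key1_nonneg
    by (simp add: o_def)
  also have "\<dots> \<le> (\<Sum>s\<in>Scov. d s)"
  proof (rule sum_mono)
    fix s assume s: "s \<in> Scov"
    have sO: "fst s \<in> Op'" using s fstO unfolding Scov_def by auto
    hence "isbest Op' (hv s) (lab Op' (hv s))" using OpB by (intro lab) auto
    hence "key1 (lab Op' (hv s)) (hv s) \<le> key1 (fst s) (hv s)" using sO unfolding isbest_def by blast
    also have "\<dots> \<le> d s" unfolding key1_def d_def using hvprop[OF s] by (intro gd_le) auto
    finally show "key1 (lab Op' (hv s)) (hv s) \<le> d s" .
  qed
  also have "\<dots> \<le> (\<Sum>s\<in>set_mset S'. d s)"
    by (rule sum_mono2) (auto simp: Scov_def d_def)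
  also have "\<dots> \<le> (\<Sum>s\<in>#S'. d s)" by (rule sum_set_mset_le) (simp add: d_def)
  finally have "ccost Op' JJ \<le> cost pos c Op' S'" unfolding ccost_def cost_def d_def by simp
  thus ?thesis using canon by blast
qed

end


context inst begin

lemma Iv_le: "J \<in> Iv \<Longrightarrow> fst J \<le> snd J" unfolding Iv_def by simp

lemma remove_nested:
  assumes C: "canon Op JJ" and J: "J1 \<in> JJ" "J2 \<in> JJ" "J1 \<noteq> J2"
    and nest: "fst J1 \<le> fst J2" "snd J2 \<le> snd J1"
  shows "canon Op (JJ - {J2}) \<and> ccost Op (JJ - {J2}) \<le> ccost Op JJ \<and> wid (JJ - {J2}) < wid JJ"
proof (intro conjI)
  have fin: "finite JJ" using C by (rule canon_fin)
  have Op: "Op \<subseteq> B" "Op \<noteq> {}" using C J unfolding canon_def by auto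
  show "canon Op (JJ - {J2})" unfolding canon_def
  proof (intro conjI)
    show "Op \<subseteq> B" using Op by simp
    show "JJ - {J2} \<subseteq> Iv" using C unfolding canon_def by auto
    show "\<forall>t\<in>T. \<exists>J\<in>JJ - {J2}. fst J \<le> t \<and> t \<le> snd J"
    proof
      fix t assume "t \<in> T"
      then obtain J where "J \<in> JJ" "fst J \<le> t" "t \<le> snd J" using C unfolding canon_def by blast
      note JJ = this
      show "\<exists>J\<in>JJ - {J2}. fst J \<le> t \<and> t \<le> snd J"
      proof (cases "J = J2")
        case True
        hence "fst J1 \<le> t \<and> t \<le> snd J1" using JJ nest by auto
        moreover have "J1 \<in> JJ - {J2}" using J by auto
        ultimately show ?thesis by blast
      next
        case False thus ?thesis using JJ by blast
      qed
    qed
    show "JJ - {J2} \<noteq> {} \<longrightarrow> Op \<noteq> {}" using Op by simp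
  qed
  show "ccost Op (JJ - {J2}) \<le> ccost Op JJ"
    unfolding ccost_def using sum_diff1[OF fin, of "\<lambda>J. key1 (lab Op J) J" J2] J key1_nonneg[of "lab Op J2" J2]
    by simp
  have w2: "0 \<le> snd J2 - fst J2" using C J unfolding canon_def Iv_def by auto
  have c: "card (JJ - {J2}) = card JJ - 1" "card JJ \<ge> 1" using J fin by (auto simp: card_gt_0_iff Suc_le_eq)
  have "real (card (JJ - {J2})) = real (card JJ) - 1" using c by (simp add: of_nat_diff)
  thus "wid (JJ - {J2}) < wid JJ"
    unfolding wid_def using sum_diff1[OF fin, of "\<lambda>J. snd J - fst J" J2] J w2 by simp
qed

lemma shrink:
  assumes C: "canon Op JJ" and J: "J1 \<in> JJ" "J2 \<in> JJ" "J1 \<noteq> J2"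
    and ov: "fst J1 < fst J2" "fst J2 \<le> snd J1" "snd J1 < snd J2"
  shows "\<exists>JJ'. canon Op JJ' \<and> ccost Op JJ' \<le> ccost Op JJ \<and> wid JJ' < wid JJ"
proof -
  have fin: "finite JJ" using C by (rule canon_fin)
  have Op: "Op \<subseteq> B" "Op \<noteq> {}" using C J unfolding canon_def by auto
  have JIv: "J \<in> JJ \<Longrightarrow> J \<in> Iv" for J using C unfolding canon_def by auto
  obtain e1 f1 where J1: "J1 = (e1,f1)" by (cases J1)
  obtain e2 f2 where J2: "J2 = (e2,f2)" by (cases J2)
  have f2T: "f2 \<in> T" and w2: "f2 - e2 \<le> 2*r" using JIv[OF J(2)] unfolding Iv_def J2 by auto
  define U where "U = {t\<in>T. f1 < t}"
  have Ufin: "finite U" unfolding U_def using finT by simp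
  have f2U: "f2 \<in> U" unfolding U_def using f2T ov unfolding J1 J2 by simp
  define e2' where "e2' = Min U"
  have e2'U: "e2' \<in> U" unfolding e2'_def using Ufin f2U Min_in by blast
  have e2'le: "e2' \<le> f2" unfolding e2'_def using Ufin f2U by (rule Min_le)
  have e2'gt: "f1 < e2'" "e2' \<in> T" using e2'U unfolding U_def by auto
  have e2e2: "e2 < e2'" using e2'gt ov unfolding J1 J2 by simp
  define J2' where "J2' = (e2', f2)"
  have J2'Iv: "J2' \<in> Iv" unfolding J2'_def Iv_def using e2'gt e2'le f2T w2 e2e2 by auto
  define JJ' where "JJ' = insert J2' (JJ - {J2})"
  have fin': "finite (JJ - {J2})" using fin by simp
  have canon': "canon Op JJ'" unfolding canon_def
  proof (intro conjI)
    show "Op \<subseteq> B" using Op by simp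
    show "JJ' \<subseteq> Iv" unfolding JJ'_def using J2'Iv JIv by auto
    show "\<forall>t\<in>T. \<exists>J\<in>JJ'. fst J \<le> t \<and> t \<le> snd J"
    proof
      fix t assume t: "t \<in> T"
      then obtain J where JJ: "J \<in> JJ" "fst J \<le> t" "t \<le> snd J" using C unfolding canon_def by blast
      show "\<exists>J\<in>JJ'. fst J \<le> t \<and> t \<le> snd J"
      proof (cases "J = J2")
        case False thus ?thesis using JJ unfolding JJ'_def by blast
      next
        case True
        show ?thesis
        proof (cases "f1 < t")
          case True
          hence "t \<in> U" using t unfolding U_def by simp
          hence "e2' \<le> t" unfolding e2'_def by (rule Min_le[OF Ufin])
          moreover have "t \<le> f2" using JJ \<open>J = J2\<close> unfolding J2 by simp
          ultimately show ?thesis unfolding JJ'_def J2'_def by auto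
        next
          case False
          hence "fst J1 \<le> t \<and> t \<le> snd J1" using JJ \<open>J = J2\<close> ov unfolding J1 J2 by auto
          moreover have "J1 \<in> JJ'" unfolding JJ'_def using J by auto
          ultimately show ?thesis by blast
        qed
      qed
    qed
    show "JJ' \<noteq> {} \<longrightarrow> Op \<noteq> {}" using Op by simp
  qed
  have lab2: "isbest Op J2' (lab Op J2')" using Op by (rule lab)
  have lab2o: "lab Op J2 \<in> Op" using lab[OF Op, of J2] unfolding isbest_def by simp
  have k1: "key1 (lab Op J2') J2' \<le> key1 (lab Op J2) J2'" using lab2 lab2o unfolding isbest_def by blast
  have k2: "key1 (lab Op J2) J2' \<le> key1 (lab Op J2) J2"
    unfolding key1_def J2'_def J2 using e2e2 e2'le w2 by (intro gd_mono) auto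
  have "(\<Sum>J\<in>JJ'. key1 (lab Op J) J) \<le> key1 (lab Op J2') J2' + (\<Sum>J\<in>JJ-{J2}. key1 (lab Op J) J)"
    unfolding JJ'_def by (rule sum_insert_le[OF fin' key1_nonneg])
  also have "\<dots> \<le> key1 (lab Op J2) J2 + (\<Sum>J\<in>JJ-{J2}. key1 (lab Op J) J)" using k1 k2 by simp
  also have "\<dots> = (\<Sum>J\<in>JJ. key1 (lab Op J) J)" using sum_diff1[OF fin, of "\<lambda>J. key1 (lab Op J) J" J2] J by simp
  finally have cc: "ccost Op JJ' \<le> ccost Op JJ" unfolding ccost_def by simp
  have "(\<Sum>J\<in>JJ'. snd J - fst J) \<le> (snd J2' - fst J2') + (\<Sum>J\<in>JJ-{J2}. snd J - fst J)"
    unfolding JJ'_def by (rule sum_insert_le[OF fin']) (use J2'Iv in \<open>simp add: Iv_def\<close>)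
  also have "\<dots> < (snd J2 - fst J2) + (\<Sum>J\<in>JJ-{J2}. snd J - fst J)"
    unfolding J2'_def J2 using e2e2 by simp
  also have "\<dots> = (\<Sum>J\<in>JJ. snd J - fst J)" using sum_diff1[OF fin, of "\<lambda>J. snd J - fst J" J2] J by simp
  finally have s1: "(\<Sum>J\<in>JJ'. snd J - fst J) < (\<Sum>J\<in>JJ. snd J - fst J)" .
  have "card JJ' \<le> Suc (card (JJ - {J2}))" unfolding JJ'_def using fin' by (simp add: card_insert_le_m1 card_insert_if)
  also have "Suc (card (JJ - {J2})) = card JJ" using card_Suc_Diff1[OF fin J(2)] .
  finally have "real (card JJ') \<le> real (card JJ)" by simp
  hence "wid JJ' < wid JJ" unfolding wid_def using s1 by simp
  thus ?thesis using canon' cc by blast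
qed

lemma improve:
  assumes C: "canon Op JJ" and J: "J1 \<in> JJ" "J2 \<in> JJ" "J1 \<noteq> J2"
    and nd: "\<not> snd J1 < fst J2" "\<not> snd J2 < fst J1"
  shows "\<exists>JJ'. canon Op JJ' \<and> ccost Op JJ' \<le> ccost Op JJ \<and> wid JJ' < wid JJ"
proof -
  have gen: "\<exists>JJ'. canon Op JJ' \<and> ccost Op JJ' \<le> ccost Op JJ \<and> wid JJ' < wid JJ"
    if a: "A1 \<in> JJ" "A2 \<in> JJ" "A1 \<noteq> A2" "fst A1 \<le> fst A2" "fst A2 \<le> snd A1" for A1 A2
  proof (cases "snd A2 \<le> snd A1")
    case True thus ?thesis using remove_nested[OF C a(1,2,3) a(4) True] by blast
  next
    case False
    show ?thesis
    proof (cases "fst A1 = fst A2")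
      case True
      thus ?thesis using remove_nested[OF C a(2,1) a(3)[symmetric]] False by auto
    next
      case ne: False
      thus ?thesis using shrink[OF C a(1,2,3)] a False by auto
    qed
  qed
  show ?thesis
  proof (cases "fst J1 \<le> fst J2")
    case True thus ?thesis using gen[OF J(1,2,3) True] nd by auto
  next
    case False thus ?thesis using gen[OF J(2,1) J(3)[symmetric]] nd by auto
  qed
qed

definition disj where "disj JJ \<longleftrightarrow> (\<forall>J1\<in>JJ. \<forall>J2\<in>JJ. J1 \<noteq> J2 \<longrightarrow> snd J1 < fst J2 \<or> snd J2 < fst J1)"

lemma contig:
  assumes C: "canon Op JJ" and D: "disj JJ"
  shows "contiguous_property T r Op (sol Op JJ)"
  unfolding contiguous_property_def
proof (intro ballI allI impI)
  fix k u v t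
  assume k: "k \<in> Op"
  assume H: "u \<in># sol Op JJ \<and> fst u = k \<and> covered_targets T r (snd u) \<noteq> {} \<and>
       v \<in># sol Op JJ \<and> fst v = k \<and> covered_targets T r (snd v) \<noteq> {} \<and>
       (\<forall>w\<in>#sol Op JJ. fst w = k \<and> covered_targets T r (snd w) \<noteq> {} \<longrightarrow>
           interval_left T r (snd u) \<le> interval_left T r (snd w)) \<and>
       (\<forall>w\<in>#sol Op JJ. fst w = k \<and> covered_targets T r (snd w) \<noteq> {} \<longrightarrow>
           interval_right T r (snd w) \<le> interval_right T r (snd v))"
  assume t: "t \<in> T" and tb: "interval_left T r (snd u) \<le> t \<and> t \<le> interval_right T r (snd v)"
  show "\<exists>w\<in>#sol Op JJ. fst w = k \<and> covers r (snd w) t"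
  proof (rule ccontr)
    assume nc: "\<not> (\<exists>w\<in>#sol Op JJ. fst w = k \<and> covers r (snd w) t)"
    have fin: "finite JJ" using C by (rule canon_fin)
    have Op: "Op \<subseteq> B" "Op \<noteq> {}" using k C unfolding canon_def by auto
    have JIv: "J \<in> JJ \<Longrightarrow> J \<in> Iv" for J using C unfolding canon_def by auto
    obtain Ju where Ju: "Ju \<in> JJ" "u = sens Op Ju" using H mem_sol[OF C] by blast
    obtain Jv where Jv: "Jv \<in> JJ" "v = sens Op Jv" using H mem_sol[OF C] by blast
    have labu: "lab Op Ju = k" using H Ju unfolding sens_def by auto
    have labv: "lab Op Jv = k" using H Jv unfolding sens_def by auto
    have ctfin: "finite (covered_targets T r p)" for p unfolding covered_targets_def using finT by simp
    define L where "L = interval_left T r (snd u)"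
    have "L \<in> covered_targets T r (snd u)" unfolding L_def interval_left_def using H ctfin Min_in by blast
    hence covL: "covers r (snd u) L" unfolding covered_targets_def by simp
    have uL: "snd u \<in> Lam r (fst Ju) (snd Ju)" using sens_in(2)[OF C Ju(1)] Ju(2) by simp
    have ule: "fst Ju \<le> snd Ju" using JIv[OF Ju(1)] by (rule Iv_le)
    have covfu: "covers r (snd u) (snd Ju)" using Lam_covers[OF uL ule] by simp
    have "\<not> covers r (snd u) t" using nc H by auto
    hence fu: "snd Ju < t" using covers_between[OF covL covfu] tb unfolding L_def by force
    define R where "R = interval_right T r (snd v)"
    have "R \<in> covered_targets T r (snd v)" unfolding R_def interval_right_def using H ctfin Max_in by blast
    hence covR: "covers r (snd v) R" unfolding covered_targets_def by simp
    have vL: "snd v \<in> Lam r (fst Jv) (snd Jv)" using sens_in(2)[OF C Jv(1)] Jv(2) by simp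
    have vle: "fst Jv \<le> snd Jv" using JIv[OF Jv(1)] by (rule Iv_le)
    have covev: "covers r (snd v) (fst Jv)" using Lam_covers[OF vL order_refl vle] .
    have ncv: "\<not> covers r (snd v) t" using nc H by auto
    have ev: "t < fst Jv"
    proof (rule ccontr)
      assume "\<not> t < fst Jv"
      hence "fst Jv \<le> t" by simp
      moreover have "t \<le> R" using tb unfolding R_def by simp
      ultimately have "covers r (snd v) t" by (rule covers_between[OF covev covR])
      thus False using ncv by simp
    qed
    obtain J where J: "J \<in> JJ" "fst J \<le> t" "t \<le> snd J" using C t unfolding canon_def by blast
    have labJ: "lab Op J \<noteq> k"
    proof
      assume "lab Op J = k"
      moreover have "covers r (snd (sens Op J)) t" using Lam_covers[OF sens_in(2)[OF C J(1)] J(2,3)] .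
      moreover have "sens Op J \<in># sol Op JJ" using mem_sol[OF C] J(1) by auto
      ultimately show False using nc unfolding sens_def by auto
    qed
    have "J \<noteq> Ju" using labJ labu by auto
    hence o1: "snd Ju < fst J" using D Ju(1) J fu ule unfolding disj_def by force
    have "J \<noteq> Jv" using labJ labv by auto
    hence o2: "snd J < fst Jv" using D Jv(1) J ev vle unfolding disj_def by force
    show False using no_pattern[OF Op JIv[OF Ju(1)] JIv[OF J(1)] JIv[OF Jv(1)] o1 o2 labu labv refl] labJ
      by simp
  qed
qed

theorem main: "\<exists>Op S. optimal T B pos c r Op S \<and> contiguous_property T r Op S"
proof -
  define CS where "CS = {x. canon (fst x) (snd x)}"
  have "CS \<subseteq> Pow B \<times> Pow Iv" unfolding CS_def canon_def by auto
  hence finCS: "finite CS" using finB finite_Iv by (meson finite_Pow_iff finite_SigmaI finite_subset)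
  have "canon B ((\<lambda>t. (t,t)) ` T)" unfolding canon_def Iv_def using Bne r0 by auto
  hence CSne: "CS \<noteq> {}" unfolding CS_def by force
  define cc where "cc x = ccost (fst x) (snd x)" for x
  define m0 where "m0 = Min (cc ` CS)"
  have m0le: "x \<in> CS \<Longrightarrow> m0 \<le> cc x" for x unfolding m0_def using finCS by simp
  have "m0 \<in> cc ` CS" unfolding m0_def using finCS CSne by simp
  define OPT where "OPT = {x\<in>CS. cc x = m0}"
  have OPTne: "OPT \<noteq> {}" using \<open>m0 \<in> cc ` CS\<close> unfolding OPT_def by force
  have finO: "finite OPT" using finCS unfolding OPT_def by simp
  define w0 where "w0 = Min ((\<lambda>x. wid (snd x)) ` OPT)"
  have "w0 \<in> (\<lambda>x. wid (snd x)) ` OPT" unfolding w0_def using finO OPTne by simp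
  then obtain x0 where x0: "x0 \<in> OPT" "wid (snd x0) = w0" by force
  have w0le: "x \<in> OPT \<Longrightarrow> w0 \<le> wid (snd x)" for x unfolding w0_def using finO by simp
  obtain Op0 JJ0 where x0e: "x0 = (Op0, JJ0)" by (cases x0)
  have C0: "canon Op0 JJ0" and cc0: "ccost Op0 JJ0 = m0" using x0 unfolding OPT_def CS_def cc_def x0e by auto
  have opt: "optimal T B pos c r Op0 (sol Op0 JJ0)" unfolding optimal_def
  proof (intro conjI allI impI)
    show "feasible T B r Op0 (sol Op0 JJ0)" using C0 by (rule feasible_sol)
    fix Op' S' assume F: "feasible T B r Op' S'"
    then obtain JJ' where "canon Op' JJ'" "ccost Op' JJ' \<le> cost pos c Op' S'" using lower by blast
    moreover have "m0 \<le> ccost Op' JJ'" using m0le[of "(Op', JJ')"] \<open>canon Op' JJ'\<close> unfolding CS_def cc_def by simp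
    ultimately show "cost pos c Op0 (sol Op0 JJ0) \<le> cost pos c Op' S'" using cost_sol[OF C0] cc0 by simp
  qed
  have D: "disj JJ0" unfolding disj_def
  proof (intro ballI impI)
    fix J1 J2 assume J: "J1 \<in> JJ0" "J2 \<in> JJ0" "J1 \<noteq> J2"
    show "snd J1 < fst J2 \<or> snd J2 < fst J1"
    proof (rule ccontr)
      assume "\<not> (snd J1 < fst J2 \<or> snd J2 < fst J1)"
      then obtain JJ' where JJ': "canon Op0 JJ'" "ccost Op0 JJ' \<le> ccost Op0 JJ0" "wid JJ' < wid JJ0"
        using improve[OF C0 J] by blast
      have "(Op0, JJ') \<in> CS" using JJ'(1) unfolding CS_def by simp
      hence "m0 \<le> ccost Op0 JJ'" using m0le unfolding cc_def by force
      hence "(Op0, JJ') \<in> OPT" using JJ'(2) cc0 \<open>(Op0, JJ') \<in> CS\<close> unfolding OPT_def cc_def by simp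
      hence "w0 \<le> wid JJ'" using w0le by force
      thus False using JJ'(3) x0(2) unfolding x0e by simp
    qed
  qed
  show ?thesis using opt contig[OF C0 D] by blast
qed

end


theorem lemma3:
  fixes T :: "real set" and B :: "'b set" and pos :: "'b \<Rightarrow> real \<times> real"
    and c :: "'b \<Rightarrow> real" and r :: real
  assumes "finite T" and "finite B" and "B \<noteq> {}"
    and "r \<ge> 0"
    and "\<forall>k \<in> B. c k \<ge> 0"
    and "\<forall>k \<in> B. snd (pos k) \<ge> 0"
  shows "\<exists>Op S. optimal T B pos c r Op S \<and> contiguous_property T r Op S"
proof -
  obtain h where "bij_betw h B {0..<card B}" using ex_bij_betw_finite_nat[OF assms(2)] by blast
  hence inj: "inj_on h B" by (rule bij_betw_imp_inj_on)
  interpret I: inst T B pos c r h using assms inj by unfold_locales auto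
  show ?thesis by (rule I.main)
qed

end
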